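(* Let $X$ be a non-negative random variable and $C>0$ a constant (which may depend on $X$). Then the following statements are equivalent: (a) For all $s\in(0,1)$, $\mathbb{E}[X^{1+s}]\le \frac{C}{1-s}$. (b) $X$ is integrable and its Laplace transform $L(t):=\mathbb{E}[\mathrm{e}^{-tX}]$ satisfies, for all $s\in(0,1)$, $$\int_0^\infty \frac{\mathbb{E}[X]+L'(u)}{u^{1+s}}\,\mathrm{d}u\le C\,\frac{\Gamma(1-s)}{s(1-s)}.$$ (c) The characteristic function $\varphi(t):=\mathbb{E}[\mathrm{e}^{itX}]$ satisfies, for all $s\in(0,1)$, $$\int_0^\infty \frac{1-\mathrm{Re}(\varphi(u))}{u^{2+s}}\,\mathrm{d}u\le C\,\frac{\sin(\pi s/2)\,\Gamma(1-s)}{s(s+1)(1-s)}.$$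
   Context: $\Gamma$ denotes the Gamma function. *)

theory Defs
  imports "HOL-Probability.Probability"
begin

end

theory Submission
  imports Defs "HOL-Real_Asymp.Real_Asymp"
begin


lemma G1:
  assumes "a > (0::real)"
  shows "(\<integral>\<^sup>+y\<in>{0<..}. ennreal (y powr (a-1) * exp (-y)) \<partial>lborel) = ennreal (Gamma a)"
proof -
  have "ennreal (Gamma a) = (\<integral>\<^sup>+ t. ennreal (indicator {0..} t * t powr (a - 1) / exp t) \<partial>lborel)"
    by (rule Gamma_conv_nn_integral_real[OF assms])
  also have "\<dots> = (\<integral>\<^sup>+y\<in>{0<..}. ennreal (y powr (a-1) * exp (-y)) \<partial>lborel)"
    by (intro nn_integral_cong_AE eventually_mono[OF AE_lborel_singleton[of 0]])
       (auto simp: indicator_def exp_minus field_simps)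
  finally show ?thesis ..
qed

lemma G2:
  assumes "a > (0::real)" "r > 0"
  shows "(\<integral>\<^sup>+y\<in>{0<..}. ennreal (y powr (a-1) * exp (-(r*y))) \<partial>lborel) = ennreal (Gamma a * r powr (-a))"
proof -
  let ?g = "\<lambda>y::real. ennreal (y powr (a-1) * exp (-y)) * indicator {0<..} y"
  have "ennreal (Gamma a) = (\<integral>\<^sup>+y. ?g y \<partial>lborel)" using G1[OF assms(1)] by simp
  also have "\<dots> = ennreal r * (\<integral>\<^sup>+x. ?g (0 + r * x) \<partial>lborel)"
    using assms by (subst nn_integral_real_affine[where c=r and t=0]) auto
  also have "(\<integral>\<^sup>+x. ?g (0 + r * x) \<partial>lborel) = (\<integral>\<^sup>+x. ennreal (r powr (a-1)) * (ennreal (x powr (a-1) * exp (-(r*x))) * indicator {0<..} x) \<partial>lborel)"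
    using assms by (intro nn_integral_cong)
      (auto simp: indicator_def powr_mult zero_less_mult_iff ennreal_mult'[symmetric] mult_ac)
  also have "\<dots> = ennreal (r powr (a-1)) * (\<integral>\<^sup>+y\<in>{0<..}. ennreal (y powr (a-1) * exp (-(r*y))) \<partial>lborel)"
    by (subst nn_integral_cmult) auto
  finally have "ennreal (Gamma a) = ennreal (r * r powr (a-1)) * (\<integral>\<^sup>+y\<in>{0<..}. ennreal (y powr (a-1) * exp (-(r*y))) \<partial>lborel)"
    using assms by (simp add: ennreal_mult mult.assoc)
  also have "r * r powr (a-1) = r powr a" using assms by (simp add: powr_diff)
  finally have *: "ennreal (Gamma a) = ennreal (r powr a) * (\<integral>\<^sup>+y\<in>{0<..}. ennreal (y powr (a-1) * exp (-(r*y))) \<partial>lborel)" .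
  have "ennreal (Gamma a * r powr (-a)) = ennreal (r powr (-a)) * ennreal (Gamma a)"
    using assms by (simp add: ennreal_mult' mult.commute)
  also have "\<dots> = ennreal (r powr (-a) * r powr a) * (\<integral>\<^sup>+y\<in>{0<..}. ennreal (y powr (a-1) * exp (-(r*y))) \<partial>lborel)"
    unfolding * using assms by (simp add: ennreal_mult mult.assoc)
  also have "r powr (-a) * r powr a = 1" using assms by (simp add: powr_minus)
  finally show ?thesis by simp
qed



lemma recip_kernel:
  assumes "y > (-1::real)"
  shows "(\<integral>\<^sup>+r\<in>{0<..}. ennreal (exp (-(r*y)) * exp (-r)) \<partial>lborel) = ennreal (1/(1+y))"
proof -
  have "(\<integral>\<^sup>+r\<in>{0<..}. ennreal (exp (-(r*y)) * exp (-r)) \<partial>lborel)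
     = (\<integral>\<^sup>+r\<in>{0<..}. ennreal (r powr (1-1) * exp (-((1+y)*r))) \<partial>lborel)"
    by (intro nn_integral_cong) (auto simp: indicator_def algebra_simps exp_add[symmetric])
  also have "\<dots> = ennreal (Gamma 1 * (1+y) powr (-1))"
    using assms by (intro G2) auto
  finally show ?thesis using assms by (simp add: powr_minus divide_inverse)
qed

lemma B1:
  assumes "0 < a" "a < (1::real)"
  shows "(\<integral>\<^sup>+y\<in>{0<..}. ennreal (y powr (a-1) / (1+y)) \<partial>lborel) = ennreal (Gamma a * Gamma (1-a))"
proof -
  have "(\<integral>\<^sup>+y\<in>{0<..}. ennreal (y powr (a-1) / (1+y)) \<partial>lborel)
      = (\<integral>\<^sup>+y. \<integral>\<^sup>+r. ennreal (y powr (a-1) * exp (-(r*y)) * exp (-r)) * indicator {0<..} r * indicator {0<..} y \<partial>lborel \<partial>lborel)"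
  proof (intro nn_integral_cong)
    fix y :: real
    show "ennreal (y powr (a-1) / (1+y)) * indicator {0<..} y =
      (\<integral>\<^sup>+r. ennreal (y powr (a-1) * exp (-(r*y)) * exp (-r)) * indicator {0<..} r * indicator {0<..} y \<partial>lborel)"
    proof (cases "y > 0")
      case True
      have "(\<integral>\<^sup>+r. ennreal (y powr (a-1) * exp (-(r*y)) * exp (-r)) * indicator {0<..} r * indicator {0<..} y \<partial>lborel)
         = (\<integral>\<^sup>+r. ennreal (y powr (a-1)) * (ennreal (exp (-(r*y)) * exp (-r)) * indicator {0<..} r) \<partial>lborel)"
        using True by (intro nn_integral_cong) (auto simp: ennreal_mult' mult_ac)
      also have "\<dots> = ennreal (y powr (a-1)) * ennreal (1/(1+y))"
        using True by (subst nn_integral_cmult) (auto simp: recip_kernel)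
      finally show ?thesis using True by (simp add: ennreal_mult'[symmetric])
    qed simp
  qed
  also have "\<dots> = (\<integral>\<^sup>+r. \<integral>\<^sup>+y. ennreal (y powr (a-1) * exp (-(r*y)) * exp (-r)) * indicator {0<..} r * indicator {0<..} y \<partial>lborel \<partial>lborel)"
    by (subst lborel_pair.Fubini') (auto simp: case_prod_unfold)
  also have "\<dots> = (\<integral>\<^sup>+r. ennreal (Gamma a) * (ennreal (r powr (1-a-1) * exp (-r)) * indicator {0<..} r) \<partial>lborel)"
  proof (intro nn_integral_cong)
    fix r :: real
    show "(\<integral>\<^sup>+y. ennreal (y powr (a-1) * exp (-(r*y)) * exp (-r)) * indicator {0<..} r * indicator {0<..} y \<partial>lborel)
       = ennreal (Gamma a) * (ennreal (r powr (1-a-1) * exp (-r)) * indicator {0<..} r)"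
    proof (cases "r > 0")
      case True
      have "(\<integral>\<^sup>+y. ennreal (y powr (a-1) * exp (-(r*y)) * exp (-r)) * indicator {0<..} r * indicator {0<..} y \<partial>lborel)
         = (\<integral>\<^sup>+y. ennreal (exp (-r)) * (ennreal (y powr (a-1) * exp (-(r*y))) * indicator {0<..} y) \<partial>lborel)"
        using True by (intro nn_integral_cong) (auto simp: ennreal_mult' mult_ac)
      also have "\<dots> = ennreal (exp (-r)) * ennreal (Gamma a * r powr (-a))"
        using True assms by (subst nn_integral_cmult) (auto simp: G2)
      finally show ?thesis using True assms
        by (simp add: ennreal_mult'[symmetric] mult_ac)
    qed simp
  qed
  also have "\<dots> = ennreal (Gamma a) * ennreal (Gamma (1-a))"
    using assms G1[of "1-a"] by (subst nn_integral_cmult) auto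
  finally show ?thesis using assms by (simp add: ennreal_mult')
qed



lemma set_nn_eq_integral:
  fixes f :: "real \<Rightarrow> real"
  assumes "set_integrable lborel A f" "A \<in> sets borel" "\<And>x. x \<in> A \<Longrightarrow> 0 \<le> f x"
  shows "(\<integral>\<^sup>+x\<in>A. ennreal (f x) \<partial>lborel) = ennreal (set_lebesgue_integral lborel A f)"
proof -
  have "(\<integral>\<^sup>+x\<in>A. ennreal (f x) \<partial>lborel) = (\<integral>\<^sup>+x. ennreal (indicator A x *\<^sub>R f x) \<partial>lborel)"
    by (intro nn_integral_cong) (auto simp: indicator_def)
  also have "\<dots> = ennreal (set_lebesgue_integral lborel A f)"
    unfolding set_lebesgue_integral_def
    using assms unfolding set_integrable_def
    by (intro nn_integral_eq_integral) (auto simp: indicator_def)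
  finally show ?thesis .
qed

lemma FTC_nn:
  fixes f F :: "real \<Rightarrow> real"
  assumes D: "\<And>x. x>0 \<Longrightarrow> DERIV F x :> f x" and C: "\<And>x. x>0 \<Longrightarrow> isCont f x"
    and N: "\<And>x. x>0 \<Longrightarrow> 0 \<le> f x"
    and A: "(F \<longlongrightarrow> A) (at_right 0)" and B: "(F \<longlongrightarrow> B) at_top"
  shows "(\<integral>\<^sup>+x\<in>{0<..}. ennreal (f x) \<partial>lborel) = ennreal (B - A)"
proof -
  have *: "set_integrable lborel (einterval (ereal 0) \<infinity>) f" "(LBINT x=ereal 0..\<infinity>. f x) = B - A"
    by (rule interval_integral_FTC_nonneg[where F=F]; 
        use D C N A B in \<open>auto simp: ereal_tendsto_simps\<close>)+
  have e: "einterval (ereal 0) \<infinity> = {0<..}" by (auto simp: einterval_def)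
  show ?thesis
    using * unfolding e interval_integral_to_infinity_eq
    by (subst set_nn_eq_integral) (use N in auto)
qed



lemma Lap1:
  assumes "t > (0::real)"
  shows "(\<integral>\<^sup>+w\<in>{0<..}. ennreal ((1 - exp (-w)) * exp (-(t*w))) \<partial>lborel) = ennreal (1/(t*(1+t)))"
proof -
  define F where "F = (\<lambda>w::real. - exp (-(t*w))/t + exp (-((1+t)*w))/(1+t))"
  have tt: "t \<noteq> 0" and t1: "1 + t \<noteq> 0" using assms by auto
  have "(\<integral>\<^sup>+w\<in>{0<..}. ennreal ((1 - exp (-w)) * exp (-(t*w))) \<partial>lborel) = ennreal (0 - F 0)"
  proof (rule FTC_nn[where F=F])
    fix x :: real assume "x > 0"
    show "DERIV F x :> (1 - exp (-x)) * exp (-(t*x))"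
      unfolding F_def
      apply (rule derivative_eq_intros refl tt t1)+
      using assms apply (simp add: divide_simps)
      apply (simp add: algebra_simps flip: exp_add)
      done
    show "isCont (\<lambda>w. (1 - exp (-w)) * exp (-(t*w))) x" by (intro continuous_intros)
    show "0 \<le> (1 - exp (-x)) * exp (-(t*x))" using \<open>x>0\<close> by auto
  next
    show "(F \<longlongrightarrow> F 0) (at_right 0)" unfolding F_def
      by (intro tendsto_intros) (auto intro!: tendsto_eq_intros simp: tt t1)
    have "((\<lambda>w. exp (-(t*w))) \<longlongrightarrow> 0) at_top" using assms by real_asymp
    moreover have "((\<lambda>w. exp (-((1+t)*w))) \<longlongrightarrow> 0) at_top" using assms by real_asymp
    ultimately have "((\<lambda>w. - exp (-(t*w))/t + exp (-((1+t)*w))/(1+t)) \<longlongrightarrow> -0/t + 0/(1+t)) at_top"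
      by (intro tendsto_intros) (auto simp: tt t1)
    thus "(F \<longlongrightarrow> 0) at_top" unfolding F_def by simp
  qed
  also have "0 - F 0 = 1/(t*(1+t))" unfolding F_def using assms by (simp add: field_simps)
  finally show ?thesis .
qed

lemma Lap2:
  assumes "t > (0::real)"
  shows "(\<integral>\<^sup>+w\<in>{0<..}. ennreal ((1 - cos w) * exp (-(t*w))) \<partial>lborel) = ennreal (1/(t*(1+t^2)))"
proof -
  define c where "c = 1/(1+t^2)"
  define F where "F = (\<lambda>w::real. - exp (-(t*w))/t + exp (-(t*w)) * (t * cos w - sin w) * c)"
  have pos: "1 + t^2 > 0" by (simp add: add_pos_nonneg)
  have p: "1+t^2 \<noteq> 0" by (smt (verit) zero_le_power2)
  have tt: "t \<noteq> 0" using assms by simp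
  have "(\<integral>\<^sup>+w\<in>{0<..}. ennreal ((1 - cos w) * exp (-(t*w))) \<partial>lborel) = ennreal (0 - F 0)"
  proof (rule FTC_nn[where F=F])
    fix x :: real assume "x > 0"
    show "DERIV F x :> (1 - cos x) * exp (-(t*x))"
      unfolding F_def
      apply (rule derivative_eq_intros refl tt)+
      using assms p c_def apply (simp add: divide_simps)
      apply (simp add: algebra_simps power2_eq_square)
      apply algebra
      done
    show "isCont (\<lambda>w. (1 - cos w) * exp (-(t*w))) x" by (intro continuous_intros)
    show "0 \<le> (1 - cos x) * exp (-(t*x))" by auto
  next
    show "(F \<longlongrightarrow> F 0) (at_right 0)" unfolding F_def
      by (intro tendsto_intros) (auto intro!: tendsto_eq_intros simp: tt)
    have e0: "((\<lambda>w. exp (-(t*w))) \<longlongrightarrow> 0) at_top" using assms by real_asymp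
    have "((\<lambda>w. exp (-(t*w)) * (t * cos w - sin w)) \<longlongrightarrow> 0) at_top"
    proof (rule Lim_null_comparison)
      show "\<forall>\<^sub>F w in at_top. norm (exp (-(t*w)) * (t * cos w - sin w)) \<le> exp (-(t*w)) * (t+1)"
      proof (intro always_eventually allI)
        fix w :: real
        have c1: "\<bar>t * cos w\<bar> \<le> t"
          using abs_cos_le_one[of w] assms by (simp add: abs_mult mult_left_le)
        have "\<bar>t * cos w - sin w\<bar> \<le> \<bar>t * cos w\<bar> + \<bar>sin w\<bar>" by (rule abs_triangle_ineq4)
        hence "\<bar>t * cos w - sin w\<bar> \<le> t + 1"
          using c1 abs_sin_le_one[of w] by linarith
        thus "norm (exp (-(t*w)) * (t * cos w - sin w)) \<le> exp (-(t*w)) * (t+1)"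
          by (simp add: abs_mult)
      qed
      show "((\<lambda>w. exp (-(t*w)) * (t+1)) \<longlongrightarrow> 0) at_top"
        using tendsto_mult_right_zero[OF e0, of "t+1"] by (simp add: mult.commute)
    qed
    hence "((\<lambda>w. exp (-(t*w)) * (t * cos w - sin w) * c) \<longlongrightarrow> 0) at_top"
      using tendsto_mult_left_zero by blast
    hence "((\<lambda>w. - exp (-(t*w))/t + exp (-(t*w)) * (t * cos w - sin w) * c) \<longlongrightarrow> -0/t + 0) at_top"
      by (intro tendsto_add tendsto_divide e0 tendsto_minus) (use assms in auto)
    thus "(F \<longlongrightarrow> 0) at_top" unfolding F_def by simp
  qed
  also have "0 - F 0 = 1/(t*(1+t^2))" unfolding F_def c_def using assms pos by (simp add: field_simps power2_eq_square)
  finally show ?thesis .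
qed



lemma set_integrable_nn:
  fixes f :: "real \<Rightarrow> real"
  assumes "f \<in> borel_measurable borel" "\<And>x. x \<in> A \<Longrightarrow> 0 \<le> f x" "A \<in> sets borel"
    "(\<integral>\<^sup>+x\<in>A. ennreal (f x) \<partial>lborel) = ennreal c"
  shows "set_integrable lborel A f"
  unfolding set_integrable_def
proof (rule integrableI_bounded)
  show "(\<lambda>x. indicator A x *\<^sub>R f x) \<in> borel_measurable lborel" using assms by simp
  have "(\<integral>\<^sup>+x. ennreal (norm (indicator A x *\<^sub>R f x)) \<partial>lborel) = (\<integral>\<^sup>+x\<in>A. ennreal (f x) \<partial>lborel)"
    using assms by (intro nn_integral_cong) (auto simp: indicator_def)
  thus "(\<integral>\<^sup>+x. ennreal (norm (indicator A x *\<^sub>R f x)) \<partial>lborel) < \<infinity>" using assms by simp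
qed

lemma sqrt_subst:
  assumes "-1 < s" "s < (1::real)"
  shows "(\<integral>\<^sup>+t\<in>{0<..}. ennreal (t powr s / (1 + t^2)) \<partial>lborel) = ennreal (Gamma ((1+s)/2) * Gamma ((1-s)/2) / 2)"
proof -
  define f where "f = (\<lambda>t::real. t powr s / (1 + t^2))"
  define g' where "g' = (\<lambda>x::real. 1 / (2 * sqrt x))"
  have pos: "\<And>t::real. 1 + t^2 > 0" by (simp add: add_pos_nonneg)
  have eq: "f (sqrt x) * g' x = (x powr ((1+s)/2 - 1) / (1 + x)) / 2" if x: "x > 0" for x
  proof -
    have a: "sqrt x powr s = x powr (s/2)" using x by (simp add: powr_half_sqrt[symmetric] powr_powr)
    have b: "1 / sqrt x = x powr (-(1/2))"
      unfolding powr_minus powr_half_sqrt[OF less_imp_le[OF x]] by (simp add: inverse_eq_divide)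
    have e: "(1+s)/2 - 1 = s/2 + -(1/2)" by simp
    have c: "x powr (s/2) * x powr (-(1/2)) = x powr ((1+s)/2 - 1)"
      unfolding e by (simp only: powr_add)
    have "f (sqrt x) * g' x = (sqrt x powr s * (1 / sqrt x)) / (1 + x) / 2"
      unfolding f_def g'_def using x by (simp add: field_simps)
    also have "\<dots> = (x powr ((1+s)/2 - 1) / (1 + x)) / 2" unfolding a b c ..
    finally show ?thesis .
  qed
  have nnB: "(\<integral>\<^sup>+x\<in>{0<..}. ennreal (f (sqrt x) * g' x) \<partial>lborel) = ennreal (Gamma ((1+s)/2) * Gamma (1 - (1+s)/2) / 2)"
  proof -
    have "(\<integral>\<^sup>+x\<in>{0<..}. ennreal (f (sqrt x) * g' x) \<partial>lborel)
        = (\<integral>\<^sup>+x. ennreal (1/2) * (ennreal (x powr ((1+s)/2 - 1) / (1 + x)) * indicator {0<..} x) \<partial>lborel)"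
    proof (intro nn_integral_cong)
      fix x :: real
      show "ennreal (f (sqrt x) * g' x) * indicator {0<..} x =
        ennreal (1/2) * (ennreal (x powr ((1+s)/2 - 1) / (1 + x)) * indicator {0<..} x)"
      proof (cases "x > 0")
        case True
        have "ennreal (1/2) * ennreal (x powr ((1+s)/2 - 1) / (1 + x)) = ennreal (1/2 * (x powr ((1+s)/2 - 1) / (1 + x)))"
          by (rule ennreal_mult'[symmetric]) simp
        thus ?thesis using True by (simp add: eq mult.assoc[symmetric])
      qed simp
    qed
    also have "\<dots> = ennreal (1/2) * ennreal (Gamma ((1+s)/2) * Gamma (1 - (1+s)/2))"
      using assms B1[of "(1+s)/2"] by (subst nn_integral_cmult) auto
    also have "\<dots> = ennreal (Gamma ((1+s)/2) * Gamma (1 - (1+s)/2) / 2)"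
      by (rule trans[OF ennreal_mult'[symmetric]]) auto
    finally show ?thesis .
  qed
  have e: "einterval 0 \<infinity> = {0<..}" by (auto simp: einterval_def)
  have int: "set_integrable lborel (einterval 0 \<infinity>) (\<lambda>x. f (sqrt x) * g' x)"
    unfolding e
    by (rule set_integrable_nn[OF _ _ _ nnB]) (auto simp: f_def g'_def intro!: divide_nonneg_nonneg)
  have d1: "DERIV sqrt x :> g' x" if "0 < ereal x" "ereal x < \<infinity>" for x
    unfolding g'_def using that
    by (auto intro!: derivative_eq_intros simp: inverse_eq_divide)
  have d2: "isCont f (sqrt x)" if "0 < ereal x" "ereal x < \<infinity>" for x
    unfolding f_def using that pos
    by (intro continuous_intros) auto
  have d3: "isCont g' x" if "0 < ereal x" "ereal x < \<infinity>" for x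
    unfolding g'_def using that
    by (intro continuous_intros) auto
  have d4: "0 \<le> f (sqrt x)" if "0 < ereal x" "ereal x < \<infinity>" for x
    unfolding f_def using pos by (intro divide_nonneg_nonneg) auto
  have d5: "0 \<le> g' x" if "0 \<le> ereal x" "ereal x \<le> \<infinity>" for x
    unfolding g'_def using that by auto
  have "(sqrt \<longlongrightarrow> 0) (at_right 0)"
    using tendsto_real_sqrt[OF tendsto_ident_at[of "0::real" "{0<..}"]] by simp
  hence d6: "((ereal \<circ> sqrt \<circ> real_of_ereal) \<longlongrightarrow> 0) (at_right 0)"
    unfolding zero_ereal_def o_assoc[symmetric] ereal_tendsto_simps by simp
  have "filterlim sqrt at_top at_top" by real_asymp
  hence d7: "((ereal \<circ> sqrt \<circ> real_of_ereal) \<longlongrightarrow> \<infinity>) (at_left \<infinity>)"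
    using ereal_tendsto_simps2(2)[of sqrt at_top] unfolding at_left_PInf filterlim_filtermap by (simp add: o_def)
  have lt: "(0::ereal) < \<infinity>" by simp
  note sub = interval_integral_substitution_nonneg[OF lt d1 d2 d3 d4 d5 d6 d7 int]
  have "(\<integral>\<^sup>+t\<in>{0<..}. ennreal (f t) \<partial>lborel) = ennreal (LBINT x=0..\<infinity>. f x)"
    using sub(1) unfolding e zero_ereal_def interval_integral_to_infinity_eq
    by (subst set_nn_eq_integral) (auto simp: f_def)
  also have "\<dots> = ennreal (LBINT x=0..\<infinity>. f (sqrt x) * g' x)" using sub(2) by simp
  also have "\<dots> = (\<integral>\<^sup>+x\<in>{0<..}. ennreal (f (sqrt x) * g' x) \<partial>lborel)"
    using int unfolding e zero_ereal_def interval_integral_to_infinity_eq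
    by (subst set_nn_eq_integral) (auto simp: f_def g'_def)
  also note nnB
  finally show ?thesis unfolding f_def by (simp add: field_simps)
qed



lemma kernel_swap:
  fixes g :: "real \<Rightarrow> real"
  assumes a: "a > 0" and gm[measurable]: "g \<in> borel_measurable borel" and gn: "\<And>w. w > 0 \<Longrightarrow> g w \<ge> 0"
  shows "(\<integral>\<^sup>+w\<in>{0<..}. ennreal (g w / w powr a) \<partial>lborel) =
    (\<integral>\<^sup>+t\<in>{0<..}. ennreal (t powr (a-1) / Gamma a) * (\<integral>\<^sup>+w\<in>{0<..}. ennreal (g w * exp (-(t*w))) \<partial>lborel) \<partial>lborel)"
proof -
  have Ga: "Gamma a > 0" using a by simp
  have "(\<integral>\<^sup>+w\<in>{0<..}. ennreal (g w / w powr a) \<partial>lborel)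
      = (\<integral>\<^sup>+w. \<integral>\<^sup>+t. ennreal (g w * (t powr (a-1) * exp (-(w*t))) / Gamma a) * indicator {0<..} t * indicator {0<..} w \<partial>lborel \<partial>lborel)"
  proof (intro nn_integral_cong)
    fix w :: real
    show "ennreal (g w / w powr a) * indicator {0<..} w =
      (\<integral>\<^sup>+t. ennreal (g w * (t powr (a-1) * exp (-(w*t))) / Gamma a) * indicator {0<..} t * indicator {0<..} w \<partial>lborel)"
    proof (cases "w > 0")
      case True
      have "(\<integral>\<^sup>+t. ennreal (g w * (t powr (a-1) * exp (-(w*t))) / Gamma a) * indicator {0<..} t * indicator {0<..} w \<partial>lborel)
         = (\<integral>\<^sup>+t. ennreal (g w / Gamma a) * (ennreal (t powr (a-1) * exp (-(w*t))) * indicator {0<..} t) \<partial>lborel)"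
        using True gn[OF True] Ga by (intro nn_integral_cong) (auto simp: ennreal_mult'[symmetric] mult_ac)
      also have "\<dots> = ennreal (g w / Gamma a) * ennreal (Gamma a * w powr (-a))"
        using True a by (subst nn_integral_cmult) (auto simp: G2)
      also have "\<dots> = ennreal (g w / w powr a)"
        using True gn[OF True] Ga by (subst ennreal_mult'[symmetric]) (auto simp: powr_minus field_simps)
      finally show ?thesis using True by simp
    qed simp
  qed
  also have "\<dots> = (\<integral>\<^sup>+t. \<integral>\<^sup>+w. ennreal (g w * (t powr (a-1) * exp (-(w*t))) / Gamma a) * indicator {0<..} t * indicator {0<..} w \<partial>lborel \<partial>lborel)"
    by (subst lborel_pair.Fubini') (auto simp: case_prod_unfold)
  also have "\<dots> = (\<integral>\<^sup>+t\<in>{0<..}. ennreal (t powr (a-1) / Gamma a) * (\<integral>\<^sup>+w\<in>{0<..}. ennreal (g w * exp (-(t*w))) \<partial>lborel) \<partial>lborel)"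
  proof (intro nn_integral_cong)
    fix t :: real
    show "(\<integral>\<^sup>+w. ennreal (g w * (t powr (a-1) * exp (-(w*t))) / Gamma a) * indicator {0<..} t * indicator {0<..} w \<partial>lborel)
      = ennreal (t powr (a-1) / Gamma a) * (\<integral>\<^sup>+w\<in>{0<..}. ennreal (g w * exp (-(t*w))) \<partial>lborel) * indicator {0<..} t"
    proof (cases "t > 0")
      case True
      have "(\<integral>\<^sup>+w. ennreal (g w * (t powr (a-1) * exp (-(w*t))) / Gamma a) * indicator {0<..} t * indicator {0<..} w \<partial>lborel)
         = (\<integral>\<^sup>+w. ennreal (t powr (a-1) / Gamma a) * (ennreal (g w * exp (-(t*w))) * indicator {0<..} w) \<partial>lborel)"
      proof (intro nn_integral_cong)
        fix w :: real
        show "ennreal (g w * (t powr (a-1) * exp (-(w*t))) / Gamma a) * indicator {0<..} t * indicator {0<..} w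
           = ennreal (t powr (a-1) / Gamma a) * (ennreal (g w * exp (-(t*w))) * indicator {0<..} w)"
        proof (cases "w > 0")
          case w: True
          have "ennreal (t powr (a-1) / Gamma a) * ennreal (g w * exp (-(t*w))) = ennreal (t powr (a-1) / Gamma a * (g w * exp (-(t*w))))"
            using Ga by (intro ennreal_mult'[symmetric]) auto
          thus ?thesis using True w by (simp add: mult_ac)
        qed simp
      qed
      also have "\<dots> = ennreal (t powr (a-1) / Gamma a) * (\<integral>\<^sup>+w\<in>{0<..}. ennreal (g w * exp (-(t*w))) \<partial>lborel)"
        by (subst nn_integral_cmult) auto
      finally show ?thesis using True by simp
    qed simp
  qed
  finally show ?thesis .
qed



lemma Gamma_reflection_real:
  fixes x :: real
  shows "Gamma x * Gamma (1 - x) = pi / sin (pi * x)"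
proof -
  have "complex_of_real (Gamma x * Gamma (1 - x)) = Gamma (of_real x) * Gamma (1 - of_real x)"
    by (simp add: Gamma_complex_of_real[symmetric])
  also have "\<dots> = of_real pi / sin (of_real pi * of_real x)" by (rule Gamma_reflection_complex)
  also have "\<dots> = complex_of_real (pi / sin (pi * x))" by (simp add: sin_of_real[symmetric])
  finally show ?thesis by (simp only: of_real_eq_iff)
qed

lemma sin_shift: "sin (pi * ((1+s)/2)) = cos (pi * s/2)"
  by (metis (no_types, opaque_lifting) add.commute arithmetic_simps(79)
    cos_pi_half distrib_left mult_eq_0_iff sin_add sin_cos_squared_add3
    sin_pi_half times_divide_eq_left times_divide_eq_right)

lemma ennreal_mult_eq:
  "(a::real) \<ge> 0 \<Longrightarrow> b \<ge> 0 \<Longrightarrow> c \<ge> 0 \<Longrightarrow> d \<ge> 0 \<Longrightarrow> a * b = c * d \<Longrightarrow> ennreal a * ennreal b = ennreal c * ennreal d"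
  by (simp add: ennreal_mult'[symmetric])

lemma const_identity:
  assumes "0 < s" "s < (1::real)"
  shows "Gamma ((1+s)/2) * Gamma ((1-s)/2) / 2 / Gamma (2+s) = Gamma (1-s) * sin (pi* s/2) / (s*(s+1))"
proof -
  have r1: "Gamma ((1+s)/2) * Gamma ((1-s)/2) = pi / cos (pi* s/2)"
  proof -
    have e: "1 - (1+s)/2 = (1-s)/2" by (simp add: field_simps)
    have "Gamma ((1+s)/2) * Gamma ((1-s)/2) = pi / sin (pi * ((1+s)/2))"
      using Gamma_reflection_real[of "(1+s)/2"] unfolding e .
    also have "sin (pi * ((1+s)/2)) = cos (pi* s/2)"
      by (rule sin_shift)
    finally show ?thesis .
  qed
  have r2: "Gamma s * Gamma (1-s) = pi / sin (pi * s)" by (rule Gamma_reflection_real)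
  have g2: "Gamma (2+s) = (1+s) * s * Gamma s"
  proof -
    have n1: "s \<notin> \<int>\<^sub>\<le>\<^sub>0" "1+s \<notin> \<int>\<^sub>\<le>\<^sub>0" using assms by auto
    show ?thesis using Gamma_plus1[OF n1(2)] Gamma_plus1[OF n1(1)] by (simp add: add_ac)
  qed
  have sd: "sin (pi * s) = 2 * sin (pi* s/2) * cos (pi* s/2)"
    using sin_double[of "pi* s/2"] by simp
  have ps: "0 < pi * s" "pi * s < pi" using assms by auto
  have "-(pi/2) < pi* s/2" "pi* s/2 < pi/2" using ps pi_gt_zero by linarith+
  hence cpos: "cos (pi* s/2) > 0" by (rule cos_gt_zero_pi)
  have spos: "sin (pi* s/2) > 0" using ps by (intro sin_gt_zero) auto
  have Gs: "Gamma s > 0" using assms by simp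
  have G1s: "Gamma (1-s) = pi / (sin (pi * s) * Gamma s)"
  proof -
    have "Gamma (1-s) = Gamma s * Gamma (1-s) / Gamma s" using Gs by simp
    also have "\<dots> = pi / sin (pi * s) / Gamma s" using r2 by simp
    finally show ?thesis by simp
  qed
  show ?thesis unfolding r1 g2 G1s sd using cpos spos Gs assms pi_gt_zero
    by (simp add: field_simps)
qed

lemma I1:
  assumes "0 < s" "s < (1::real)"
  shows "(\<integral>\<^sup>+w\<in>{0<..}. ennreal ((1 - exp (-w)) / w powr (1+s)) \<partial>lborel) = ennreal (Gamma (1-s) / s)"
proof -
  have Gp: "Gamma (1+s) > 0" using assms by simp
  have "(\<integral>\<^sup>+w\<in>{0<..}. ennreal ((1 - exp (-w)) / w powr (1+s)) \<partial>lborel)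
     = (\<integral>\<^sup>+t\<in>{0<..}. ennreal (t powr (1+s-1) / Gamma (1+s)) * (\<integral>\<^sup>+w\<in>{0<..}. ennreal ((1 - exp (-w)) * exp (-(t*w))) \<partial>lborel) \<partial>lborel)"
    using assms by (intro kernel_swap) auto
  also have "\<dots> = (\<integral>\<^sup>+t. ennreal (1 / Gamma (1+s)) * (ennreal (t powr (s-1) / (1+t)) * indicator {0<..} t) \<partial>lborel)"
  proof (intro nn_integral_cong)
    fix t :: real
    show "ennreal (t powr (1+s-1) / Gamma (1+s)) * (\<integral>\<^sup>+w\<in>{0<..}. ennreal ((1 - exp (-w)) * exp (-(t*w))) \<partial>lborel) * indicator {0<..} t
       = ennreal (1 / Gamma (1+s)) * (ennreal (t powr (s-1) / (1+t)) * indicator {0<..} t)"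
    proof (cases "t > 0")
      case True
      have h: "t powr (1+s-1) = t * t powr (s-1)"
        using True powr_add[of t 1 "s-1"] by simp
      have nz: "t \<noteq> 0" "1 + t \<noteq> 0" "Gamma (1+s) \<noteq> 0" using True Gp by auto
      have e: "t powr (1+s-1) / Gamma (1+s) * (1/(t*(1+t))) = 1 / Gamma (1+s) * (t powr (s-1) / (1+t))"
        unfolding h using nz by simp
      have "ennreal (t powr (1+s-1) / Gamma (1+s)) * ennreal (1/(t*(1+t))) = ennreal (1 / Gamma (1+s)) * ennreal (t powr (s-1) / (1+t))"
        using True Gp by (intro ennreal_mult_eq e) auto
      thus ?thesis using True by (simp add: Lap1)
    qed simp
  qed
  also have "\<dots> = ennreal (1 / Gamma (1+s)) * ennreal (Gamma s * Gamma (1-s))"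
    using assms by (subst nn_integral_cmult) (auto simp: B1)
  also have "\<dots> = ennreal (Gamma (1-s) / s)"
  proof -
    have n1: "s \<notin> \<int>\<^sub>\<le>\<^sub>0" using assms by auto
    have g: "Gamma (1+s) = s * Gamma s" using Gamma_plus1[OF n1] by (simp add: add.commute)
    have "Gamma s \<noteq> 0" using Gamma_real_pos[OF assms(1)] by linarith
    thus ?thesis using Gp assms by (subst ennreal_mult'[symmetric]) (auto simp: g field_simps)
  qed
  finally show ?thesis .
qed

lemma I2:
  assumes "0 < s" "s < (1::real)"
  shows "(\<integral>\<^sup>+w\<in>{0<..}. ennreal ((1 - cos w) / w powr (2+s)) \<partial>lborel) = ennreal (Gamma (1-s) * sin (pi* s/2) / (s*(s+1)))"
proof -
  have Gp: "Gamma (2+s) > 0" using assms by simp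
  have "(\<integral>\<^sup>+w\<in>{0<..}. ennreal ((1 - cos w) / w powr (2+s)) \<partial>lborel)
     = (\<integral>\<^sup>+t\<in>{0<..}. ennreal (t powr (2+s-1) / Gamma (2+s)) * (\<integral>\<^sup>+w\<in>{0<..}. ennreal ((1 - cos w) * exp (-(t*w))) \<partial>lborel) \<partial>lborel)"
    using assms by (intro kernel_swap) auto
  also have "\<dots> = (\<integral>\<^sup>+t. ennreal (1 / Gamma (2+s)) * (ennreal (t powr s / (1+t^2)) * indicator {0<..} t) \<partial>lborel)"
  proof (intro nn_integral_cong)
    fix t :: real
    show "ennreal (t powr (2+s-1) / Gamma (2+s)) * (\<integral>\<^sup>+w\<in>{0<..}. ennreal ((1 - cos w) * exp (-(t*w))) \<partial>lborel) * indicator {0<..} t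
       = ennreal (1 / Gamma (2+s)) * (ennreal (t powr s / (1+t^2)) * indicator {0<..} t)"
    proof (cases "t > 0")
      case True
      have p: "1 + t^2 > 0" by (simp add: add_pos_nonneg)
      have h: "t powr (2+s-1) = t * t powr s"
        using True powr_add[of t 1 s] by (simp add: add_ac)
      have nz: "t \<noteq> 0" "1 + t^2 \<noteq> 0" "Gamma (2+s) \<noteq> 0" using True Gp p by auto
      have e: "t powr (2+s-1) / Gamma (2+s) * (1/(t*(1+t^2))) = 1 / Gamma (2+s) * (t powr s / (1+t^2))"
        unfolding h using nz by simp
      have "ennreal (t powr (2+s-1) / Gamma (2+s)) * ennreal (1/(t*(1+t^2))) = ennreal (1 / Gamma (2+s)) * ennreal (t powr s / (1+t^2))"
        using True Gp p by (intro ennreal_mult_eq e) auto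
      thus ?thesis using True by (simp add: Lap2)
    qed simp
  qed
  also have "\<dots> = ennreal (1 / Gamma (2+s)) * ennreal (Gamma ((1+s)/2) * Gamma ((1-s)/2) / 2)"
    using assms by (subst nn_integral_cmult) (auto simp: sqrt_subst)
  also have "\<dots> = ennreal (Gamma ((1+s)/2) * Gamma ((1-s)/2) / 2 / Gamma (2+s))"
    using Gp by (subst ennreal_mult'[symmetric]) (auto simp: ac_simps)
  also have "\<dots> = ennreal (Gamma (1-s) * sin (pi* s/2) / (s*(s+1)))"
    using const_identity[OF assms] by simp
  finally show ?thesis .
qed



lemma exp_quad:
  fixes a :: real
  shows "\<bar>exp a - 1 - a\<bar> \<le> a^2 * exp \<bar>a\<bar>"
proof -
  have l0: "0 \<le> exp a - 1 - a" using exp_ge_add_one_self[of a] by linarith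
  have k: "exp a * (1 - a) \<le> 1"
  proof -
    have "1 - a \<le> exp (-a)" using exp_ge_add_one_self[of "-a"] by linarith
    hence "exp a * (1 - a) \<le> exp a * exp (-a)" by (intro mult_left_mono) auto
    thus ?thesis by (simp add: exp_minus)
  qed
  have u1: "exp a - 1 - a \<le> a * (exp a - 1)" using k by (simp add: algebra_simps)
  have u2: "a * (exp a - 1) \<le> a^2 * exp \<bar>a\<bar>"
  proof (cases "a \<ge> 0")
    case True
    have "exp a - 1 \<le> a * exp a" using k by (simp add: algebra_simps)
    hence "a * (exp a - 1) \<le> a * (a * exp a)" using True by (intro mult_left_mono) auto
    thus ?thesis using True by (simp add: power2_eq_square)
  next
    case False
    have "1 - exp a \<le> -a" using exp_ge_add_one_self[of a] by linarith
    moreover have "0 \<le> 1 - exp a" using False by simp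
    ultimately have "(-a) * (1 - exp a) \<le> (-a) * (-a)" using False by (intro mult_left_mono) auto
    hence "a * (exp a - 1) \<le> a^2" by (simp add: algebra_simps power2_eq_square)
    also have "a^2 \<le> a^2 * exp \<bar>a\<bar>" using mult_left_mono[of 1 "exp \<bar>a\<bar>" "a^2"] by simp
    finally show ?thesis .
  qed
  show ?thesis using l0 u1 u2 by simp
qed

lemma sq_exp_bound:
  fixes u y :: real
  assumes "u > 0" "y \<ge> 0"
  shows "y^2 * exp (-(u*y/2)) \<le> 16 / u^2"
proof -
  have "u*y/4 \<le> exp (u*y/4)" using exp_ge_add_one_self[of "u*y/4"] by linarith
  hence "(u*y/4)^2 \<le> (exp (u*y/4))^2" using assms by (intro power_mono) auto
  also have "(exp (u*y/4))^2 = exp (u*y/2)" by (simp add: exp_double[symmetric] power2_eq_square exp_add[symmetric])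
  finally have "u^2 * y^2 / 16 \<le> exp (u*y/2)" by (simp add: power_mult_distrib power_divide)
  hence "u^2 * y^2 \<le> 16 * exp (u*y/2)" by simp
  hence "y^2 \<le> 16 * exp (u*y/2) / u^2" using assms by (simp add: field_simps)
  hence "y^2 * exp (-(u*y/2)) \<le> 16 * exp (u*y/2) / u^2 * exp (-(u*y/2))" by (intro mult_right_mono) auto
  also have "\<dots> = 16 / u^2" by (simp add: exp_minus field_simps)
  finally show ?thesis .
qed

lemma pointwise_bound:
  fixes u y h :: real
  assumes "u > 0" "y \<ge> 0" "\<bar>h\<bar> \<le> u/2"
  shows "\<bar>exp (-(u+h)*y) - exp (-u*y) + h * (y * exp (-u*y))\<bar> \<le> h^2 * (16 / u^2)"
proof -
  have eq: "exp (-(u+h)*y) - exp (-u*y) + h * (y * exp (-u*y)) = exp (-u*y) * (exp (-h*y) - 1 - (-h*y))"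
    by (simp add: algebra_simps exp_add[symmetric])
  have "\<bar>exp (-h*y) - 1 - (-h*y)\<bar> \<le> (-h*y)^2 * exp \<bar>-h*y\<bar>" by (rule exp_quad)
  also have "\<bar>-h*y\<bar> = \<bar>h\<bar> * y" using assms by (simp add: abs_mult)
  finally have b1: "\<bar>exp (-h*y) - 1 - (-h*y)\<bar> \<le> h^2 * y^2 * exp (\<bar>h\<bar> * y)" by (simp add: power_mult_distrib)
  have "\<bar>exp (-(u+h)*y) - exp (-u*y) + h * (y * exp (-u*y))\<bar> = exp (-u*y) * \<bar>exp (-h*y) - 1 - (-h*y)\<bar>"
    unfolding eq by (simp add: abs_mult)
  also have "\<dots> \<le> exp (-u*y) * (h^2 * y^2 * exp (\<bar>h\<bar> * y))" by (intro mult_left_mono b1) auto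
  also have "\<dots> = h^2 * (y^2 * exp (\<bar>h\<bar> * y - u*y))" by (simp add: exp_diff exp_minus field_simps)
  also have "\<dots> \<le> h^2 * (y^2 * exp (-(u*y/2)))"
  proof -
    have "\<bar>h\<bar> * y \<le> u/2 * y" using assms by (intro mult_right_mono) auto
    hence "exp (\<bar>h\<bar> * y - u*y) \<le> exp (-(u*y/2))" by simp
    thus ?thesis by (intro mult_left_mono) auto
  qed
  also have "\<dots> \<le> h^2 * (16 / u^2)" using sq_exp_bound[OF assms(1,2)] by (intro mult_left_mono) auto
  finally show ?thesis .
qed



lemma L_deriv:
  assumes PS: "prob_space M" and Xm[measurable]: "X \<in> borel_measurable M"
    and Xn: "\<forall>x\<in>space M. X x \<ge> 0" and u: "u > (0::real)"
  shows "((\<lambda>t. LINT x|M. exp (- t * X x)) has_real_derivative -(LINT x|M. X x * exp (- u * X x))) (at u)"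
proof -
  interpret prob_space M by (rule PS)
  define L where "L = (\<lambda>t. LINT x|M. exp (- t * X x))"
  define D where "D = (LINT x|M. X x * exp (- u * X x))"
  have intE: "integrable M (\<lambda>x. exp (- t * X x))" if "t \<ge> 0" for t
  proof (rule integrable_const_bound[where B=1])
    show "AE x in M. norm (exp (- t * X x)) \<le> 1"
      using Xn that by (intro AE_I2) (auto simp: mult_nonneg_nonneg)
  qed simp
  have intD: "integrable M (\<lambda>x. X x * exp (- u * X x))"
  proof (rule integrable_const_bound[where B="1/u"])
    show "AE x in M. norm (X x * exp (- u * X x)) \<le> 1/u"
    proof (intro AE_I2)
      fix x assume "x \<in> space M"
      hence y: "X x \<ge> 0" using Xn by auto
      have "u * X x \<le> exp (u * X x)" using exp_ge_add_one_self[of "u * X x"] by linarith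
      hence "X x \<le> exp (u * X x) / u" using u by (simp add: field_simps)
      hence "X x * exp (- u * X x) \<le> exp (u * X x) / u * exp (- u * X x)"
        by (intro mult_right_mono) auto
      also have "\<dots> = 1/u" by (simp add: exp_minus field_simps)
      finally show "norm (X x * exp (- u * X x)) \<le> 1/u" using y by simp
    qed
  qed simp
  have key: "\<bar>(L (u + h) - L u) / h - (-D)\<bar> \<le> \<bar>h\<bar> * (16 / u^2)" if h0: "h \<noteq> 0" and hu: "\<bar>h\<bar> \<le> u/2" for h
  proof -
    have uh: "u + h \<ge> 0" using hu u by linarith
    have "L (u + h) - L u + h * D = (LINT x|M. exp (-(u+h) * X x) - exp (-u * X x) + h * (X x * exp (- u * X x)))"
      unfolding L_def D_def using intE[OF uh] intE[of u] intD u
      by (simp add: integral_add integral_diff)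
    hence "\<bar>L (u + h) - L u + h * D\<bar> = norm (LINT x|M. exp (-(u+h) * X x) - exp (-u * X x) + h * (X x * exp (- u * X x)))"
      by simp
    also have "\<dots> \<le> (LINT x|M. norm (exp (-(u+h) * X x) - exp (-u * X x) + h * (X x * exp (- u * X x))))"
      by (rule integral_norm_bound)
    also have "\<dots> \<le> h^2 * (16 / u^2)"
    proof (rule integral_le_const)
      show "integrable M (\<lambda>x. norm (exp (-(u+h) * X x) - exp (-u * X x) + h * (X x * exp (- u * X x))))"
        using intE[OF uh] intE[of u] intD u by (intro integrable_norm Bochner_Integration.integrable_add Bochner_Integration.integrable_diff integrable_mult_right) auto
      show "AE x in M. norm (exp (-(u+h) * X x) - exp (-u * X x) + h * (X x * exp (- u * X x))) \<le> h^2 * (16 / u^2)"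
        using Xn pointwise_bound[OF u _ hu] by (intro AE_I2) auto
    qed
    finally have "\<bar>L (u + h) - L u + h * D\<bar> \<le> h^2 * (16 / u^2)" .
    note A = this
    have e1: "(L (u + h) - L u) / h - (-D) = (L (u + h) - L u + h * D) / h"
      using h0 by (simp add: field_simps)
    have hh: "h^2 = \<bar>h\<bar> * \<bar>h\<bar>" by (simp add: power2_eq_square)
    have hp: "\<bar>h\<bar> > 0" using h0 by simp
    have "\<bar>(L (u + h) - L u) / h - (-D)\<bar> = \<bar>L (u + h) - L u + h * D\<bar> / \<bar>h\<bar>"
      unfolding e1 by (rule abs_divide)
    also have "\<dots> \<le> (h^2 * (16 / u^2)) / \<bar>h\<bar>" using A hp by (intro divide_right_mono) auto
    also have "\<dots> = \<bar>h\<bar> * (16 / u^2)" unfolding hh mult.assoc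
      by (rule nonzero_mult_div_cancel_left) (use hp in simp)
    finally show ?thesis .
  qed
  have "((\<lambda>h. (L (u + h) - L u) / h - (-D)) \<longlongrightarrow> 0) (at 0)"
  proof (rule Lim_null_comparison)
    show "\<forall>\<^sub>F h in at 0. norm ((L (u + h) - L u) / h - (-D)) \<le> \<bar>h\<bar> * (16 / u^2)"
      unfolding eventually_at
    proof (intro exI[of _ "u/2"] conjI ballI impI)
      show "u/2 > 0" using u by simp
      fix h :: real assume "h \<in> UNIV" "h \<noteq> 0 \<and> dist h 0 < u/2"
      hence "h \<noteq> 0" "\<bar>h\<bar> \<le> u/2" by (auto simp: dist_real_def)
      from key[OF this] show "norm ((L (u + h) - L u) / h - (-D)) \<le> \<bar>h\<bar> * (16 / u^2)" by simp
    qed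
    have "((\<lambda>h::real. \<bar>h\<bar> * (16 / u^2)) \<longlongrightarrow> \<bar>0\<bar> * (16 / u^2)) (at 0)"
      by (intro tendsto_intros)
    thus "((\<lambda>h::real. \<bar>h\<bar> * (16 / u^2)) \<longlongrightarrow> 0) (at 0)" by simp
  qed
  hence "((\<lambda>h. (L (u + h) - L u) / h) \<longlongrightarrow> -D) (at 0)" by (rule LIM_zero_iff[THEN iffD1])
  thus ?thesis unfolding DERIV_def L_def D_def .
qed



lemma scale_int:
  fixes f :: "real \<Rightarrow> real"
  assumes fm[measurable]: "f \<in> borel_measurable borel" and c: "c > 0"
  shows "(\<integral>\<^sup>+u\<in>{0<..}. ennreal (f (c*u)) \<partial>lborel) = ennreal (1/c) * (\<integral>\<^sup>+v\<in>{0<..}. ennreal (f v) \<partial>lborel)"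
proof -
  let ?g = "\<lambda>v. ennreal (f v) * indicator {0<..} v"
  have "(\<integral>\<^sup>+v. ?g v \<partial>lborel) = ennreal \<bar>c\<bar> * (\<integral>\<^sup>+x. ?g (0 + c * x) \<partial>lborel)"
    using c by (intro nn_integral_real_affine) auto
  also have "(\<integral>\<^sup>+x. ?g (0 + c * x) \<partial>lborel) = (\<integral>\<^sup>+u\<in>{0<..}. ennreal (f (c*u)) \<partial>lborel)"
    using c by (intro nn_integral_cong) (auto simp: indicator_def zero_less_mult_iff)
  finally have "ennreal (1/c) * (\<integral>\<^sup>+v\<in>{0<..}. ennreal (f v) \<partial>lborel) = ennreal (1/c) * ennreal c * (\<integral>\<^sup>+u\<in>{0<..}. ennreal (f (c*u)) \<partial>lborel)"
    using c by (simp add: mult.assoc)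
  also have "ennreal (1/c) * ennreal c = 1" using c by (simp add: ennreal_mult'[symmetric])
  finally show ?thesis by simp
qed

lemma inner_gen:
  fixes f :: "real \<Rightarrow> real" and p :: real
  assumes fm[measurable]: "f \<in> borel_measurable borel" and y: "y > 0"
    and eq: "\<And>u. u > 0 \<Longrightarrow> F u = y powr p * f (y*u)" and Fn: "\<And>u. u > 0 \<Longrightarrow> F u \<ge> 0"
    and I: "(\<integral>\<^sup>+v\<in>{0<..}. ennreal (f v) \<partial>lborel) = ennreal K" and K: "K \<ge> 0"
  shows "(\<integral>\<^sup>+u\<in>{0<..}. ennreal (F u) \<partial>lborel) = ennreal (K * y powr (p - 1))"
proof -
  have fn: "f v \<ge> 0" if "v > 0" for v
  proof -
    have "F (v / y) \<ge> 0" using that y by (intro Fn) auto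
    thus ?thesis using eq[of "v/y"] that y by (simp add: zero_le_mult_iff)
  qed
  have "(\<integral>\<^sup>+u\<in>{0<..}. ennreal (F u) \<partial>lborel) = (\<integral>\<^sup>+u. ennreal (y powr p) * (ennreal (f (y*u)) * indicator {0<..} u) \<partial>lborel)"
    using y fn by (intro nn_integral_cong) (auto simp: indicator_def eq ennreal_mult')
  also have "\<dots> = ennreal (y powr p) * (\<integral>\<^sup>+u\<in>{0<..}. ennreal (f (y*u)) \<partial>lborel)"
    by (subst nn_integral_cmult) auto
  also have "\<dots> = ennreal (y powr p) * (ennreal (1/y) * ennreal K)"
    using y by (simp add: scale_int I)
  also have "\<dots> = ennreal (K * y powr (p - 1))"
    using y K by (simp add: ennreal_mult'[symmetric] powr_diff field_simps)
  finally show ?thesis .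
qed

lemma inner_b:
  assumes s: "0 < s" "s < (1::real)" and y: "y \<ge> 0"
  shows "(\<integral>\<^sup>+u\<in>{0<..}. ennreal (y * (1 - exp (- u * y)) / u powr (1+s)) \<partial>lborel) = ennreal (Gamma (1-s) / s * y powr (1+s))"
proof (cases "y = 0")
  case True thus ?thesis by simp
next
  case False
  hence yp: "y > 0" using y by simp
  have "(\<integral>\<^sup>+u\<in>{0<..}. ennreal (y * (1 - exp (- u * y)) / u powr (1+s)) \<partial>lborel) = ennreal (Gamma (1-s) / s * y powr (2 + s - 1))"
  proof (rule inner_gen[where f="\<lambda>v. (1 - exp (-v)) / v powr (1+s)"])
    fix u :: real assume u: "u > 0"
    show "y * (1 - exp (- u * y)) / u powr (1+s) = y powr (2+s) * ((1 - exp (-(y*u))) / (y*u) powr (1+s))"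
      using u yp by (simp add: powr_mult powr_add field_simps power2_eq_square)
    show "y * (1 - exp (- u * y)) / u powr (1+s) \<ge> 0" using u yp by (auto intro!: divide_nonneg_nonneg mult_nonneg_nonneg)
  next
    show "(\<integral>\<^sup>+v\<in>{0<..}. ennreal ((1 - exp (-v)) / v powr (1+s)) \<partial>lborel) = ennreal (Gamma (1-s) / s)"
      by (rule I1[OF s])
    show "Gamma (1-s) / s \<ge> 0" using s by simp
  qed (use yp in auto)
  thus ?thesis by (simp add: add_ac)
qed

lemma inner_c:
  assumes s: "0 < s" "s < (1::real)" and y: "y \<ge> 0"
  shows "(\<integral>\<^sup>+u\<in>{0<..}. ennreal ((1 - cos (u * y)) / u powr (2+s)) \<partial>lborel) = ennreal (Gamma (1-s) * sin (pi * s/2) / (s*(s+1)) * y powr (1+s))"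
proof (cases "y = 0")
  case True thus ?thesis by simp
next
  case False
  hence yp: "y > 0" using y by simp
  have "(\<integral>\<^sup>+u\<in>{0<..}. ennreal ((1 - cos (u * y)) / u powr (2+s)) \<partial>lborel) = ennreal (Gamma (1-s) * sin (pi * s/2) / (s*(s+1)) * y powr (2 + s - 1))"
  proof (rule inner_gen[where f="\<lambda>v. (1 - cos v) / v powr (2+s)"])
    fix u :: real assume u: "u > 0"
    show "(1 - cos (u * y)) / u powr (2+s) = y powr (2+s) * ((1 - cos (y*u)) / (y*u) powr (2+s))"
      using u yp by (simp add: powr_mult field_simps)
    show "(1 - cos (u * y)) / u powr (2+s) \<ge> 0" using u yp by (auto intro!: divide_nonneg_nonneg)
  next
    show "(\<integral>\<^sup>+v\<in>{0<..}. ennreal ((1 - cos v) / v powr (2+s)) \<partial>lborel) = ennreal (Gamma (1-s) * sin (pi * s/2) / (s*(s+1)))"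
      by (rule I2[OF s])
    have "sin (pi * s/2) > 0" using s by (intro sin_gt_zero) auto
    thus "Gamma (1-s) * sin (pi * s/2) / (s*(s+1)) \<ge> 0" using s by simp
  qed (use yp in auto)
  thus ?thesis by (simp add: add_ac)
qed

lemma ennreal_cancel_le:
  assumes "k > 0" "d \<ge> 0"
  shows "(ennreal k * A \<le> ennreal (k * d)) \<longleftrightarrow> (A \<le> ennreal d)"
proof -
  have "ennreal (k * d) = ennreal k * ennreal d" using assms by (simp add: ennreal_mult)
  moreover have "ennreal k \<noteq> 0" "ennreal k \<noteq> \<top>" using assms by auto
  ultimately show ?thesis by (simp add: ennreal_mult_le_mult_iff)
qed



lemma swap_M:
  fixes M :: "'a measure" and h :: "real \<Rightarrow> 'a \<Rightarrow> real"
  assumes PS: "prob_space M"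
    and hm: "(\<lambda>(u, x). ennreal (h u x) * indicator {0<..} u) \<in> borel_measurable (lborel \<Otimes>\<^sub>M M)"
  shows "(\<integral>\<^sup>+u. (\<integral>\<^sup>+x. ennreal (h u x) \<partial>M) * indicator {0<..} u \<partial>lborel)
       = (\<integral>\<^sup>+x. (\<integral>\<^sup>+u\<in>{0<..}. ennreal (h u x) \<partial>lborel) \<partial>M)"
proof -
  interpret P: pair_sigma_finite lborel M
    unfolding pair_sigma_finite_def using PS sigma_finite_lborel prob_space_imp_sigma_finite by auto
  have "(\<integral>\<^sup>+u. (\<integral>\<^sup>+x. ennreal (h u x) \<partial>M) * indicator {0<..} u \<partial>lborel)
      = (\<integral>\<^sup>+u. (\<integral>\<^sup>+x. ennreal (h u x) * indicator {0<..} u \<partial>M) \<partial>lborel)"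
  proof (intro nn_integral_cong)
    fix u :: real
    show "(\<integral>\<^sup>+x. ennreal (h u x) \<partial>M) * indicator {0<..} u = (\<integral>\<^sup>+x. ennreal (h u x) * indicator {0<..} u \<partial>M)"
      by (cases "u > 0") auto
  qed
  also have "\<dots> = (\<integral>\<^sup>+x. (\<integral>\<^sup>+u. ennreal (h u x) * indicator {0<..} u \<partial>lborel) \<partial>M)"
    by (rule P.Fubini'[OF hm, symmetric])
  finally show ?thesis .
qed

lemma LHS_c:
  fixes M :: "'a measure" and X :: "'a \<Rightarrow> real"
  assumes PS: "prob_space M" and Xm[measurable]: "X \<in> borel_measurable M"
    and Xn: "\<forall>x\<in>space M. X x \<ge> 0" and s: "0 < s" "s < (1::real)"
  shows "(\<integral>\<^sup>+ u\<in>{0<..}. ennreal ((1 - Re (CLINT x|M. exp (\<i> * complex_of_real (u * X x)))) / u powr (2 + s)) \<partial>lborel)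
     = ennreal (Gamma (1-s) * sin (pi * s/2) / (s*(s+1))) * (\<integral>\<^sup>+ x. ennreal (X x powr (1 + s)) \<partial>M)"
proof -
  interpret prob_space M by (rule PS)
  let ?K = "Gamma (1-s) * sin (pi * s/2) / (s*(s+1))"
  have ReE: "Re (CLINT x|M. exp (\<i> * complex_of_real (u * X x))) = (LINT x|M. cos (u * X x))" for u
  proof -
    have "integrable M (\<lambda>x. exp (\<i> * complex_of_real (u * X x)))"
      by (rule integrable_const_bound[where B=1]) (auto simp: norm_exp)
    hence "Re (CLINT x|M. exp (\<i> * complex_of_real (u * X x))) = (LINT x|M. Re (exp (\<i> * complex_of_real (u * X x))))"
      by (simp add: integral_bounded_linear[OF bounded_linear_Re])
    also have "\<dots> = (LINT x|M. cos (u * X x))" by (simp add: Re_exp)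
    finally show ?thesis .
  qed
  have intc: "integrable M (\<lambda>x. cos (u * X x))" for u
    by (rule integrable_const_bound[where B=1]) auto
  have step1: "ennreal ((1 - Re (CLINT x|M. exp (\<i> * complex_of_real (u * X x)))) / u powr (2 + s))
      = (\<integral>\<^sup>+x. ennreal ((1 - cos (u * X x)) / u powr (2+s)) \<partial>M)" for u
  proof -
    have "(1 - Re (CLINT x|M. exp (\<i> * complex_of_real (u * X x)))) / u powr (2 + s)
        = (LINT x|M. (1 - cos (u * X x)) / u powr (2+s))"
      unfolding ReE using intc[of u] by (simp add: prob_space)
    moreover have "(\<integral>\<^sup>+x. ennreal ((1 - cos (u * X x)) / u powr (2+s)) \<partial>M) = ennreal (LINT x|M. (1 - cos (u * X x)) / u powr (2+s))"
      using intc[of u] by (intro nn_integral_eq_integral) (auto intro!: divide_nonneg_nonneg)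
    ultimately show ?thesis by (simp only:)
  qed
  have "(\<integral>\<^sup>+ u\<in>{0<..}. ennreal ((1 - Re (CLINT x|M. exp (\<i> * complex_of_real (u * X x)))) / u powr (2 + s)) \<partial>lborel)
      = (\<integral>\<^sup>+u. (\<integral>\<^sup>+x. ennreal ((1 - cos (u * X x)) / u powr (2+s)) \<partial>M) * indicator {0<..} u \<partial>lborel)"
    by (simp only: step1)
  also have "\<dots> = (\<integral>\<^sup>+x. (\<integral>\<^sup>+u\<in>{0<..}. ennreal ((1 - cos (u * X x)) / u powr (2+s)) \<partial>lborel) \<partial>M)"
    by (rule swap_M[OF PS]) (simp add: case_prod_unfold)
  also have "\<dots> = (\<integral>\<^sup>+x. ennreal ?K * ennreal (X x powr (1+s)) \<partial>M)"
  proof (intro nn_integral_cong)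
    have "sin (pi * s/2) > 0" using s by (intro sin_gt_zero) auto
    hence Kn: "?K \<ge> 0" using s by simp
    fix x assume "x \<in> space M"
    hence "X x \<ge> 0" using Xn by auto
    show "(\<integral>\<^sup>+u\<in>{0<..}. ennreal ((1 - cos (u * X x)) / u powr (2+s)) \<partial>lborel) = ennreal ?K * ennreal (X x powr (1+s))"
      unfolding inner_c[OF s \<open>X x \<ge> 0\<close>] by (rule ennreal_mult'[OF Kn])
  qed
  also have "\<dots> = ennreal ?K * (\<integral>\<^sup>+ x. ennreal (X x powr (1 + s)) \<partial>M)"
    by (rule nn_integral_cmult) simp
  finally show ?thesis .
qed



lemma LHS_b:
  fixes M :: "'a measure" and X :: "'a \<Rightarrow> real"
  assumes PS: "prob_space M" and Xm[measurable]: "X \<in> borel_measurable M"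
    and Xn: "\<forall>x\<in>space M. X x \<ge> 0" and iX: "integrable M X" and s: "0 < s" "s < (1::real)"
  shows "(\<integral>\<^sup>+ u\<in>{0<..}. ennreal (((LINT x|M. X x) + deriv (\<lambda>t. LINT x|M. exp (- t * X x)) u) / u powr (1 + s)) \<partial>lborel)
     = ennreal (Gamma (1-s) / s) * (\<integral>\<^sup>+ x. ennreal (X x powr (1 + s)) \<partial>M)"
proof -
  interpret prob_space M by (rule PS)
  let ?K = "Gamma (1-s) / s"
  let ?h = "\<lambda>u x. X x * (1 - exp (- u * X x)) / u powr (1+s)"
  have step1: "ennreal (((LINT x|M. X x) + deriv (\<lambda>t. LINT x|M. exp (- t * X x)) u) / u powr (1 + s)) * indicator {0<..} u
      = (\<integral>\<^sup>+x. ennreal (?h u x) \<partial>M) * indicator {0<..} u" for u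
  proof (cases "u > 0")
    case True
    have d: "deriv (\<lambda>t. LINT x|M. exp (- t * X x)) u = -(LINT x|M. X x * exp (- u * X x))"
      by (rule DERIV_imp_deriv[OF L_deriv[OF PS Xm Xn True]])
    have i2: "integrable M (\<lambda>x. X x * exp (- u * X x))"
    proof (rule Bochner_Integration.integrable_bound[OF iX])
      show "AE x in M. norm (X x * exp (- u * X x)) \<le> norm (X x)"
      proof (intro AE_I2)
        fix x assume "x \<in> space M"
        hence y: "X x \<ge> 0" using Xn by auto
        have "exp (- u * X x) \<le> 1" using y True by (simp add: mult_nonneg_nonneg)
        hence "X x * exp (- u * X x) \<le> X x * 1" using y by (intro mult_left_mono) auto
        thus "norm (X x * exp (- u * X x)) \<le> norm (X x)" using y by simp
      qed
    qed simp
    have i3: "integrable M (\<lambda>x. X x * (1 - exp (- u * X x)))"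
      using iX i2 by (simp add: algebra_simps)
    have e: "((LINT x|M. X x) + deriv (\<lambda>t. LINT x|M. exp (- t * X x)) u) / u powr (1 + s) = (LINT x|M. ?h u x)"
      unfolding d using iX i2 by (simp add: algebra_simps diff_divide_distrib)
    have "(\<integral>\<^sup>+x. ennreal (?h u x) \<partial>M) = ennreal (LINT x|M. ?h u x)"
      using i3 True Xn by (intro nn_integral_eq_integral) (auto intro!: divide_nonneg_nonneg mult_nonneg_nonneg)
    thus ?thesis using e by (simp only:)
  qed simp
  have "(\<integral>\<^sup>+ u\<in>{0<..}. ennreal (((LINT x|M. X x) + deriv (\<lambda>t. LINT x|M. exp (- t * X x)) u) / u powr (1 + s)) \<partial>lborel)
      = (\<integral>\<^sup>+u. (\<integral>\<^sup>+x. ennreal (?h u x) \<partial>M) * indicator {0<..} u \<partial>lborel)"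
    by (simp only: step1)
  also have "\<dots> = (\<integral>\<^sup>+x. (\<integral>\<^sup>+u\<in>{0<..}. ennreal (?h u x) \<partial>lborel) \<partial>M)"
    by (rule swap_M[OF PS]) (simp add: case_prod_unfold)
  also have "\<dots> = (\<integral>\<^sup>+x. ennreal ?K * ennreal (X x powr (1+s)) \<partial>M)"
  proof (intro nn_integral_cong)
    have Kn: "?K \<ge> 0" using s by simp
    fix x assume "x \<in> space M"
    hence "X x \<ge> 0" using Xn by auto
    show "(\<integral>\<^sup>+u\<in>{0<..}. ennreal (?h u x) \<partial>lborel) = ennreal ?K * ennreal (X x powr (1+s))"
      unfolding inner_b[OF s \<open>X x \<ge> 0\<close>] by (rule ennreal_mult'[OF Kn])
  qed
  also have "\<dots> = ennreal ?K * (\<integral>\<^sup>+ x. ennreal (X x powr (1 + s)) \<partial>M)"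
    by (rule nn_integral_cmult) simp
  finally show ?thesis .
qed

lemma integrable_from_a:
  fixes M :: "'a measure" and X :: "'a \<Rightarrow> real"
  assumes PS: "prob_space M" and Xm[measurable]: "X \<in> borel_measurable M"
    and Xn: "\<forall>x\<in>space M. X x \<ge> 0"
    and A: "(\<integral>\<^sup>+ x. ennreal (X x powr (1 + 1/2)) \<partial>M) \<le> ennreal c"
  shows "integrable M X"
proof (rule integrableI_bounded)
  interpret prob_space M by (rule PS)
  show "X \<in> borel_measurable M" by simp
  have pt: "ennreal (norm (X x)) \<le> 1 + ennreal (X x powr (1 + 1/2))" if "x \<in> space M" for x
  proof -
    have y: "X x \<ge> 0" using Xn that by auto
    have "X x \<le> 1 + X x powr (1 + 1/2)"
    proof (cases "X x \<le> 1")
      case True thus ?thesis by (smt (verit) powr_ge_zero)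
    next
      case False
      hence "X x powr 1 \<le> X x powr (1 + 1/2)" by (intro powr_mono) auto
      thus ?thesis using y by simp
    qed
    hence "ennreal (X x) \<le> ennreal (1 + X x powr (1 + 1/2))" by (rule ennreal_leI)
    thus ?thesis using y by (simp add: ennreal_plus)
  qed
  have "(\<integral>\<^sup>+x. ennreal (norm (X x)) \<partial>M) \<le> (\<integral>\<^sup>+x. 1 + ennreal (X x powr (1 + 1/2)) \<partial>M)"
    by (intro nn_integral_mono) (use pt in auto)
  also have "\<dots> = 1 + (\<integral>\<^sup>+ x. ennreal (X x powr (1 + 1/2)) \<partial>M)"
    by (subst nn_integral_add) (auto simp: emeasure_space_1)
  also have "\<dots> \<le> 1 + ennreal c" using A by (intro add_left_mono)
  also have "\<dots> < \<infinity>" by simp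
  finally show "(\<integral>\<^sup>+x. ennreal (norm (X x)) \<partial>M) < \<infinity>" .
qed



theorem lemma2p2:
  fixes M :: "'a measure" and X :: "'a \<Rightarrow> real" and C :: real
  assumes "prob_space M"
    and "X \<in> borel_measurable M"
    and "\<forall>x\<in>space M. X x \<ge> 0"
    and "C > 0"
  defines "L \<equiv> (\<lambda>t::real. LINT x|M. exp (- t * X x))"
    and "\<phi> \<equiv> (\<lambda>t::real. CLINT x|M. exp (\<i> * complex_of_real (t * X x)))"
  shows "((\<forall>s\<in>{0<..<1::real}.
              (\<integral>\<^sup>+ x. ennreal (X x powr (1 + s)) \<partial>M) \<le> ennreal (C / (1 - s)))
          \<longleftrightarrow>
          (integrable M X \<and>
           (\<forall>s\<in>{0<..<1::real}.
              (\<integral>\<^sup>+ u\<in>{0<..}. ennreal (((LINT x|M. X x) + deriv L u) / u powr (1 + s)) \<partial>lborel)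
                \<le> ennreal (C * Gamma (1 - s) / (s * (1 - s))))))
       \<and>
         ((integrable M X \<and>
           (\<forall>s\<in>{0<..<1::real}.
              (\<integral>\<^sup>+ u\<in>{0<..}. ennreal (((LINT x|M. X x) + deriv L u) / u powr (1 + s)) \<partial>lborel)
                \<le> ennreal (C * Gamma (1 - s) / (s * (1 - s)))))
          \<longleftrightarrow>
          (\<forall>s\<in>{0<..<1::real}.
              (\<integral>\<^sup>+ u\<in>{0<..}. ennreal ((1 - Re (\<phi> u)) / u powr (2 + s)) \<partial>lborel)
                \<le> ennreal (C * sin (pi * s / 2) * Gamma (1 - s) / (s * (s + 1) * (1 - s)))))"
proof -
  note PS = assms(1) and Xm = assms(2) and Xn = assms(3) and Cp = assms(4)
  let ?A = "\<lambda>s. (\<integral>\<^sup>+ x. ennreal (X x powr (1 + s)) \<partial>M)"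
  let ?a = "\<forall>s\<in>{0<..<1::real}. ?A s \<le> ennreal (C / (1 - s))"
  let ?b = "\<lambda>s. (\<integral>\<^sup>+ u\<in>{0<..}. ennreal (((LINT x|M. X x) + deriv L u) / u powr (1 + s)) \<partial>lborel)
                \<le> ennreal (C * Gamma (1 - s) / (s * (1 - s)))"
  let ?c = "\<lambda>s. (\<integral>\<^sup>+ u\<in>{0<..}. ennreal ((1 - Re (\<phi> u)) / u powr (2 + s)) \<partial>lborel)
                \<le> ennreal (C * sin (pi * s / 2) * Gamma (1 - s) / (s * (s + 1) * (1 - s)))"
  have Fb: "?b s \<longleftrightarrow> ?A s \<le> ennreal (C / (1 - s))" if iX: "integrable M X" and s: "s \<in> {0<..<1}" for s
  proof -
    from s have s0: "0 < s" and s1: "s < 1" by auto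
    have k: "C * Gamma (1 - s) / (s * (1 - s)) = Gamma (1-s) / s * (C / (1 - s))" by simp
    have kp: "Gamma (1-s) / s > 0" using s0 s1 by simp
    show ?thesis unfolding L_def LHS_b[OF PS Xm Xn iX s0 s1] k
      by (rule ennreal_cancel_le[OF kp]) (use Cp s1 in simp)
  qed
  have Fc: "?c s \<longleftrightarrow> ?A s \<le> ennreal (C / (1 - s))" if s: "s \<in> {0<..<1}" for s
  proof -
    from s have s0: "0 < s" and s1: "s < 1" by auto
    have k: "C * sin (pi * s / 2) * Gamma (1 - s) / (s * (s + 1) * (1 - s))
        = Gamma (1-s) * sin (pi * s/2) / (s*(s+1)) * (C / (1 - s))" by simp
    have "sin (pi * s/2) > 0" using s0 s1 by (intro sin_gt_zero) auto
    hence kp: "Gamma (1-s) * sin (pi * s/2) / (s*(s+1)) > 0" using s0 s1 by simp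
    show ?thesis unfolding \<phi>_def LHS_c[OF PS Xm Xn s0 s1] k
      by (rule ennreal_cancel_le[OF kp]) (use Cp s1 in simp)
  qed
  have aI: "integrable M X" if a: ?a
  proof (rule integrable_from_a[OF PS Xm Xn])
    have "(1/2::real) \<in> {0<..<1}" by simp
    with a show "?A (1/2) \<le> ennreal (C / (1 - 1/2))" by (rule bspec)
  qed
  have ab: "?a \<longleftrightarrow> (integrable M X \<and> (\<forall>s\<in>{0<..<1::real}. ?b s))"
    using Fb aI by blast
  have ac: "?a \<longleftrightarrow> (\<forall>s\<in>{0<..<1::real}. ?c s)"
    using Fc by blast
  show ?thesis using ab ac by blast
qed

end
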